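(* Let $\underline{P}$ be a lower prevision that is 2-coherent wherever it is defined (its domain containing the gambles below), with conjugate $\overline{P}$. Let $X$ be a gamble and $0<s<t$. Then (a) $[\underline{P}(|X|^s)]^{1/s}\le[\overline{P}(|X|^s)]^{1/s}\le[\overline{P}(|X|^t)]^{1/t}$; (b) if $X\ge 0$, then $[\underline{P}(X^s)]^{1/s}\le[\underline{P}(X^t)]^{1/t}$.
   Context: $\Pi$ is a partition of the sure event into pairwise disjoint non-impossible events; a gamble is a bounded map $X:\Pi\to\mathbb{R}$, and $|X|^s$, $X^s$ are defined pointwise. A lower prevision $\underline{P}:\mathcal{D}\to\mathbb{R}$ is 2-coherent iff for all $X_0,X_1\in\mathcal{D}$, $s_1\ge 0$, $s_0\in\mathbb{R}$, $\sup[s_1(X_1-\underline{P}(X_1))-s_0(X_0-\underline{P}(X_0))]\ge 0$; its conjugate is $\overline{P}(Y)=-\underline{P}(-Y)$. *)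

theory Defs
  imports Complex_Main
begin

text \<open>The partition \<Pi> is modelled by a type 'w (types are nonempty).
  A gamble is a bounded real function on 'w.\<close>

definition gamble :: "('w \<Rightarrow> real) \<Rightarrow> bool" where
  "gamble X \<longleftrightarrow> bdd_above (range (\<lambda>w. \<bar>X w\<bar>))"

definition two_coherent :: "('w \<Rightarrow> real) set \<Rightarrow> (('w \<Rightarrow> real) \<Rightarrow> real) \<Rightarrow> bool" where
  "two_coherent D LP \<longleftrightarrow>
     (\<forall>X0\<in>D. \<forall>X1\<in>D. \<forall>s1::real. \<forall>s0::real. s1 \<ge> 0 \<longrightarrow>
        (SUP w. s1 * (X1 w - LP X1) - s0 * (X0 w - LP X0)) \<ge> 0)"

definition conj_upper :: "(('w \<Rightarrow> real) \<Rightarrow> real) \<Rightarrow> ('w \<Rightarrow> real) \<Rightarrow> real" where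
  "conj_upper LP Y = - LP (\<lambda>w. - Y w)"

end

theory Submission
  imports Defs "HOL-Analysis.Analysis"
begin

lemma tangent_powr:
  fixes w u r :: real
  assumes "0 \<le> w" "0 \<le> u" "1 < r"
  shows "r * (u powr (r - 1)) * w \<le> w powr r + (r - 1) * u powr r"
proof -
  define q where "q = r / (r - 1)"
  have q1: "q > 1" using assms unfolding q_def by (simp add: field_simps)
  have pq: "1 / r + 1 / q = 1" using assms unfolding q_def by (simp add: field_simps)
  have "w * u powr (r - 1) \<le> w powr r / r + (u powr (r - 1)) powr q / q"
    by (rule Youngs_inequality) (use assms q1 pq in auto)
  also have "(u powr (r - 1)) powr q = u powr r"
    using assms unfolding q_def by (simp add: powr_powr)
  finally have "w * u powr (r - 1) \<le> w powr r / r + u powr r / q" .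
  then have "r * (w * u powr (r - 1)) \<le> r * (w powr r / r + u powr r / q)"
    using assms by (intro mult_left_mono) auto
  also have "\<dots> = w powr r + (r - 1) * u powr r"
    using assms unfolding q_def by (simp add: field_simps)
  finally show ?thesis by (simp add: mult_ac)
qed

lemma coh_bound:
  assumes coh: "two_coherent D LP" and "X0 \<in> D" "X1 \<in> D" "s1 \<ge> 0"
    and b: "\<And>w. s1 * (X1 w - LP X1) - s0 * (X0 w - LP X0) \<le> c"
  shows "0 \<le> c"
proof -
  have "0 \<le> (SUP w. s1 * (X1 w - LP X1) - s0 * (X0 w - LP X0))"
    using coh assms unfolding two_coherent_def by blast
  also have "\<dots> \<le> c" by (rule cSUP_least) (auto intro: b)
  finally show ?thesis .
qed

lemma lp_nonneg:
  assumes coh: "two_coherent D LP" and "Y \<in> D" "\<And>w. Y w \<ge> 0"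
  shows "LP Y \<ge> 0"
proof -
  have "0 \<le> LP Y"
    by (rule coh_bound[OF coh assms(2) assms(2), of 0 1]) (use assms(3) in auto)
  then show ?thesis .
qed

lemma lp_le_up:
  assumes coh: "two_coherent D LP" and "Y \<in> D" "(\<lambda>w. - Y w) \<in> D"
  shows "LP Y \<le> conj_upper LP Y"
proof -
  have "0 \<le> - LP Y - LP (\<lambda>w. - Y w)"
    by (rule coh_bound[OF coh assms(3) assms(2), of 1 "-1"]) auto
  then show ?thesis unfolding conj_upper_def by simp
qed

theorem proposition1:
  fixes D :: "('w \<Rightarrow> real) set" and LP :: "('w \<Rightarrow> real) \<Rightarrow> real"
    and X :: "'w \<Rightarrow> real" and s t :: real
  assumes D_gambles: "\<forall>Y\<in>D. gamble Y"
    and coh: "two_coherent D LP"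
    and X_gamble: "gamble X"
    and st: "0 < s" "s < t"
    and dom_s: "(\<lambda>w. \<bar>X w\<bar> powr s) \<in> D" "(\<lambda>w. - (\<bar>X w\<bar> powr s)) \<in> D"
    and dom_t: "(\<lambda>w. \<bar>X w\<bar> powr t) \<in> D" "(\<lambda>w. - (\<bar>X w\<bar> powr t)) \<in> D"
  shows "LP (\<lambda>w. \<bar>X w\<bar> powr s) powr (1 / s)
           \<le> conj_upper LP (\<lambda>w. \<bar>X w\<bar> powr s) powr (1 / s)
         \<and> conj_upper LP (\<lambda>w. \<bar>X w\<bar> powr s) powr (1 / s)
           \<le> conj_upper LP (\<lambda>w. \<bar>X w\<bar> powr t) powr (1 / t)
         \<and> ((\<forall>w. X w \<ge> 0) \<longrightarrow>
              LP (\<lambda>w. X w powr s) powr (1 / s) \<le> LP (\<lambda>w. X w powr t) powr (1 / t))"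
proof -
  define W where "W = (\<lambda>w. \<bar>X w\<bar> powr s)"
  define r where "r = t / s"
  have r1: "r > 1" using st unfolding r_def by simp
  have Wr: "\<And>w. W w powr r = \<bar>X w\<bar> powr t"
    unfolding W_def r_def using st by (simp add: powr_powr)
  have Wnn: "\<And>w. W w \<ge> 0" unfolding W_def by simp
  have l0: "LP W \<ge> 0" using lp_nonneg[OF coh dom_s(1)] unfolding W_def by simp
  have lu: "LP W \<le> conj_upper LP W" using lp_le_up[OF coh dom_s] unfolding W_def by simp
  have A: "LP W powr (1 / s) \<le> conj_upper LP W powr (1 / s)"
    using l0 lu st by (intro powr_mono2) auto
  define u where "u = conj_upper LP W"
  have u0: "u \<ge> 0" using l0 lu unfolding u_def by simp
  define U where "U = conj_upper LP (\<lambda>w. \<bar>X w\<bar> powr t)"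
  have "0 \<le> U - u powr r"
  proof (rule coh_bound[OF coh dom_s(2) dom_t(2), of 1 "r * u powr (r - 1)"])
    fix w
    have "r * (u powr (r - 1)) * W w \<le> W w powr r + (r - 1) * u powr r"
      by (rule tangent_powr) (use Wnn u0 r1 in auto)
    moreover have "u powr r = u powr (r - 1) * u"
      using u0 r1 by (cases "u = 0") (auto simp: powr_diff field_simps)
    moreover have "LP (\<lambda>w. - (\<bar>X w\<bar> powr t)) = - U" "LP (\<lambda>w. - (\<bar>X w\<bar> powr s)) = - u"
      "\<bar>X w\<bar> powr s = W w" "\<bar>X w\<bar> powr t = W w powr r"
      unfolding U_def u_def conj_upper_def W_def using Wr W_def by auto
    ultimately show "1 * (- (\<bar>X w\<bar> powr t) - LP (\<lambda>w. - (\<bar>X w\<bar> powr t)))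
       - r * u powr (r - 1) * (- (\<bar>X w\<bar> powr s) - LP (\<lambda>w. - (\<bar>X w\<bar> powr s))) \<le> U - u powr r"
      by (simp add: algebra_simps)
  qed simp
  then have Uu: "u powr r \<le> U" by simp
  have B: "u powr (1 / s) \<le> U powr (1 / t)"
  proof -
    have "u powr (1 / s) = (u powr r) powr (1 / t)"
      using st unfolding r_def by (simp add: powr_powr)
    also have "\<dots> \<le> U powr (1 / t)"
      using Uu st by (intro powr_mono2) auto
    finally show ?thesis .
  qed
  have C: "LP (\<lambda>w. X w powr s) powr (1 / s) \<le> LP (\<lambda>w. X w powr t) powr (1 / t)"
    if X0: "\<forall>w. X w \<ge> 0"
  proof -
    have eW: "(\<lambda>w. X w powr s) = W" unfolding W_def using X0 by auto
    have eT: "(\<lambda>w. X w powr t) = (\<lambda>w. \<bar>X w\<bar> powr t)" using X0 by auto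
    define l where "l = LP W"
    define L where "L = LP (\<lambda>w. \<bar>X w\<bar> powr t)"
    have "0 \<le> L - l powr r"
    proof (rule coh_bound[OF coh dom_t(1) dom_s(1), of "r * l powr (r - 1)" 1])
      show "0 \<le> r * l powr (r - 1)" using r1 by simp
      fix w
      have "r * (l powr (r - 1)) * W w \<le> W w powr r + (r - 1) * l powr r"
        by (rule tangent_powr) (use Wnn l0 r1 l_def in auto)
      moreover have "l powr r = l powr (r - 1) * l"
        using l0 r1 l_def by (cases "l = 0") (auto simp: powr_diff field_simps)
      ultimately show "r * l powr (r - 1) * (\<bar>X w\<bar> powr s - LP (\<lambda>w. \<bar>X w\<bar> powr s))
        - 1 * (\<bar>X w\<bar> powr t - LP (\<lambda>w. \<bar>X w\<bar> powr t)) \<le> L - l powr r"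
        using Wr[of w] unfolding L_def l_def W_def
        by (simp add: algebra_simps)
    qed
    then have Ll: "l powr r \<le> L" by simp
    have "l powr (1 / s) = (l powr r) powr (1 / t)"
      using st unfolding r_def by (simp add: powr_powr)
    also have "\<dots> \<le> L powr (1 / t)"
      using Ll st l0 l_def by (intro powr_mono2) auto
    finally show ?thesis unfolding eW eT l_def L_def .
  qed
  show ?thesis using A B C unfolding W_def u_def U_def by blast
qed

end
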